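(* Let $l$ be a positive integer, $\epsilon\in(0,1)$, $\varphi\in\mathbb{R}$, and let $N$ be a positive integer with $N\ge 5.34\ln(4l/\epsilon)$. Let $N_x\sim\mathrm{Bin}\big(N,(1+\cos(2\pi\varphi))/2\big)$ and $N_y\sim\mathrm{Bin}\big(N,(1+\sin(2\pi\varphi))/2\big)$ be independent. Then $$\Pr\Big(\Big|\frac{N_x}{N}-\frac{1+\cos(2\pi\varphi)}{2}\Big|\le 0.306\Big)\ge\sqrt{1-\epsilon/l},\qquad \Pr\Big(\Big|\frac{N_y}{N}-\frac{1+\sin(2\pi\varphi)}{2}\Big|\le 0.306\Big)\ge\sqrt{1-\epsilon/l},$$ and, with $t=\frac{1}{2\pi}\big(\mathrm{atan2}(2N_y/N-1,2N_x/N-1)\big)_{\mathrm{mod}\,2\pi}$ and $x=(t-1/6)_{\mathrm{mod}\,1}$, the probability that $\big((\varphi)_{\mathrm{mod}\,1}-x\big)_{\mathrm{mod}\,1}\in(0,1/3)$ is at least $1-\epsilon/l$.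
   Context: $N_x$ and $N_y$ model the numbers of outcomes $1$ in $N$ measurements of the qubit state $(|0\rangle+e^{i2\pi\varphi}|1\rangle)/\sqrt2$ with the POVMs $\{|\psi_x\rangle\langle\psi_x|,\mathbb{I}-|\psi_x\rangle\langle\psi_x|\}$, $|\psi_x\rangle=(|0\rangle+|1\rangle)/\sqrt2$, and $\{|\psi_y\rangle\langle\psi_y|,\mathbb{I}-|\psi_y\rangle\langle\psi_y|\}$, $|\psi_y\rangle=(|0\rangle+i|1\rangle)/\sqrt2$, respectively. $(a)_{\mathrm{mod}\,c}$ is the representative of $a$ in $[0,c)$; $\mathrm{atan2}(y,x)$ is the polar angle of $(x,y)$ (with any fixed convention at $(0,0)$). *)

theory Defs
  imports "HOL-Probability.Probability"
begin

definition rmod :: "real \<Rightarrow> real \<Rightarrow> real" where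
  "rmod a c = a - c * of_int \<lfloor>a / c\<rfloor>"

text \<open>atan2(y,x): polar angle of (x,y), in (-pi,pi]; convention atan2(0,0) = 0.\<close>
definition atan2 :: "real \<Rightarrow> real \<Rightarrow> real" where
  "atan2 y x = Arg (Complex x y)"

definition px :: "real \<Rightarrow> real" where
  "px \<phi> = (1 + cos (2 * pi * \<phi>)) / 2"

definition py :: "real \<Rightarrow> real" where
  "py \<phi> = (1 + sin (2 * pi * \<phi>)) / 2"

definition NxNy :: "nat \<Rightarrow> real \<Rightarrow> (nat \<times> nat) pmf" where
  "NxNy N \<phi> = pair_pmf (binomial_pmf N (px \<phi>)) (binomial_pmf N (py \<phi>))"

definition est_t :: "nat \<Rightarrow> nat \<Rightarrow> nat \<Rightarrow> real" where
  "est_t N nx ny = rmod (atan2 (2 * real ny / real N - 1) (2 * real nx / real N - 1)) (2 * pi) / (2 * pi)"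

definition est_x :: "nat \<Rightarrow> nat \<Rightarrow> nat \<Rightarrow> real" where
  "est_x N nx ny = rmod (est_t N nx ny - 1/6) 1"

end

theory Submission imports Defs begin

lemma hoeff:
  fixes N l :: nat and \<epsilon> p :: real
  assumes "l > 0" "0 < \<epsilon>" "\<epsilon> < 1" "N > 0" "real N \<ge> 5.34 * ln (4 * real l / \<epsilon>)"
    and p: "p \<in> {0..1}"
  shows "measure_pmf.prob (binomial_pmf N p) {x. \<bar>real x / real N - p\<bar> \<le> 0.306} \<ge> 1 - \<epsilon> / (2 * real l)"
proof -
  have bd: "binomial_distribution p" using p by unfold_locales
  have H: "measure_pmf.prob (binomial_pmf N p) {x. \<bar>real x / real N - p\<bar> \<ge> 0.306} \<le> 2 * exp (-2 * real N * 0.306\<^sup>2)"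
    using binomial_distribution.prob_abs_ge'[OF bd assms(4), of "0.306"] by simp
  have L: "ln (4 * real l / \<epsilon>) > 0" using assms by (simp add: field_simps)
  have "-2 * real N * 0.306\<^sup>2 \<le> - ln (4 * real l / \<epsilon>)"
  proof -
    have sq: "(0.306::real)^2 = 0.093636" by (simp add: power2_eq_square)
    show ?thesis unfolding sq using assms(5) L by (simp add: algebra_simps)
  qed
  hence "exp (-2 * real N * 0.306\<^sup>2) \<le> exp (- ln (4 * real l / \<epsilon>))" by simp
  also have "\<dots> = \<epsilon> / (4 * real l)" using assms by (simp add: exp_minus)
  finally have E: "2 * exp (-2 * real N * 0.306\<^sup>2) \<le> \<epsilon> / (2 * real l)" by simp
  let ?M = "binomial_pmf N p"
  have "1 \<le> measure_pmf.prob ?M ({x. \<bar>real x / real N - p\<bar> \<le> 0.306} \<union> {x. \<bar>real x / real N - p\<bar> \<ge> 0.306})"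
  proof -
    have "{x. \<bar>real x / real N - p\<bar> \<le> 0.306} \<union> {x. \<bar>real x / real N - p\<bar> \<ge> 0.306} = UNIV" by auto
    thus ?thesis by simp
  qed
  also have "\<dots> \<le> measure_pmf.prob ?M {x. \<bar>real x / real N - p\<bar> \<le> 0.306} + measure_pmf.prob ?M {x. \<bar>real x / real N - p\<bar> \<ge> 0.306}"
    by (rule measure_Un_le) auto
  finally show ?thesis using H E by linarith
qed

lemma rmod1_shift: assumes "0 \<le> y" "y < 1" shows "rmod (y + of_int j) 1 = y"
proof -
  have "\<lfloor>y + of_int j\<rfloor> = j" using assms by linarith
  thus ?thesis by (simp add: rmod_def)
qed

lemma key_ineq:
  fixes cc ss a b :: real
  assumes cs: "cc^2 + ss^2 = 1" and ha: "\<bar>a - cc\<bar> \<le> 0.612" and hb: "\<bar>b - ss\<bar> \<le> 0.612"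
  shows "a*cc + b* ss > 0" and "(b*cc - a* ss)^2 < 3 * (a*cc + b* ss)^2"
proof -
  define e1 where "e1 = a - cc"
  define e2 where "e2 = b - ss"
  define f1 where "f1 = e1*cc + e2* ss"
  define f2 where "f2 = e2*cc - e1* ss"
  have "f1^2 + f2^2 = (e1^2+e2^2)*(cc^2+ss^2)" unfolding f1_def f2_def by algebra
  hence ff: "f1^2 + f2^2 = e1^2+e2^2" using cs by simp
  have "e1^2 \<le> 0.612^2" using ha unfolding e1_def
    by (metis abs_ge_zero power2_abs power_mono)
  moreover have "e2^2 \<le> 0.612^2" using hb unfolding e2_def
    by (metis abs_ge_zero power2_abs power_mono)
  moreover have "(0.612::real)^2 = 0.374544" by (simp add: power2_eq_square)
  ultimately have fb: "f1^2 + f2^2 \<le> 0.749088" using ff by linarith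
  have R: "a*cc + b* ss = 1 + f1" unfolding f1_def e1_def e2_def using cs by (simp add: algebra_simps power2_eq_square)
  have I: "b*cc - a* ss = f2" unfolding f2_def e1_def e2_def by (simp add: algebra_simps)
  have c34: "(0.749088::real) < 3/4" by simp
  have "f2^2 \<ge> 0" by simp
  hence "f1^2 < 1" using fb c34 by linarith
  hence "\<bar>f1\<bar> < 1" using abs_square_less_1 by blast
  thus "a*cc + b* ss > 0" using R by linarith
  have fb': "f1^2 + f2^2 < 3/4" using fb c34 by linarith
  have eqq: "3*(1+f1)^2 - f2^2 = (2*f1+3/2)^2 + 3/4 - (f1^2 + f2^2)"
    by (simp add: power2_eq_square algebra_simps)
  have "(2*f1+3/2)^2 \<ge> 0" by simp
  hence "f2^2 < 3*(1+f1)^2" using eqq fb' by linarith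
  thus "(b*cc - a* ss)^2 < 3 * (a*cc + b* ss)^2" unfolding R I .
qed

lemma geo:
  fixes a b \<phi> :: real
  assumes ha: "\<bar>a - cos (2*pi*\<phi>)\<bar> \<le> 0.612" and hb: "\<bar>b - sin (2*pi*\<phi>)\<bar> \<le> 0.612"
  shows "rmod (rmod \<phi> 1 - rmod (rmod (Arg (Complex a b)) (2*pi) / (2*pi) - 1/6) 1) 1 \<in> {0<..<1/3}"
proof -
  define c where "c = cos (2*pi*\<phi>)"
  define s where "s = sin (2*pi*\<phi>)"
  have cs: "c^2 + s^2 = 1" unfolding c_def s_def by (simp add: add.commute)
  define R where "R = a*c + b* s"
  define I where "I = b*c - a* s"
  have Rp: "R > 0" and RI: "I^2 < 3*R^2" using key_ineq[OF cs] ha hb unfolding R_def I_def c_def s_def by auto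
  define z where "z = Complex a b"
  have nz2: "(cmod z)^2 = R^2 + I^2"
  proof -
    have "(cmod z)^2 = a^2 + b^2" unfolding z_def by (simp add: cmod_def)
    also have "\<dots> = (a^2+b^2)*(c^2+s^2)" using cs by simp
    also have "\<dots> = R^2 + I^2" unfolding R_def I_def by algebra
    finally show ?thesis .
  qed
  have z0: "z \<noteq> 0" using nz2 Rp by auto
  have nzp: "cmod z > 0" using z0 by simp
  define A where "A = Arg z"
  have cA: "cos A = a / cmod z" unfolding A_def using cos_Arg[OF z0] by (simp add: z_def)
  have sA: "sin A = b / cmod z" unfolding A_def using sin_Arg[OF z0] by (simp add: z_def)
  define \<delta> where "\<delta> = A - 2*pi*\<phi>"
  have cd: "cos \<delta> = R / cmod z" unfolding \<delta>_def cos_diff cA sA R_def c_def s_def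
    by (simp add: add_divide_distrib mult.commute)
  have sd: "sin \<delta> = I / cmod z" unfolding \<delta>_def sin_diff cA sA I_def c_def s_def
    by (simp add: diff_divide_distrib mult.commute)
  define t where "t = I / R"
  define \<theta> where "\<theta> = arctan t"
  have sq: "sqrt (1 + t^2) = cmod z / R"
  proof -
    have "1 + t^2 = (cmod z / R)^2" unfolding t_def using nz2 Rp by (simp add: field_simps power2_eq_square)
    thus ?thesis using nzp Rp by simp
  qed
  have ct: "cos \<theta> = R / cmod z" unfolding \<theta>_def cos_arctan sq by simp
  have st: "sin \<theta> = I / cmod z" unfolding \<theta>_def sin_arctan sq unfolding t_def using Rp by simp
  have "cos (\<delta> - \<theta>) = (R^2 + I^2) / (cmod z)^2"
    unfolding cos_diff cd sd ct st by (simp add: power2_eq_square add_divide_distrib)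
  also have "\<dots> = 1" using nz2 nzp Rp by simp
  finally obtain n :: int where n: "\<delta> - \<theta> = of_int n * 2 * pi" using cos_one_2pi_int[of "\<delta> - \<theta>"] by auto
  have tb: "\<bar>t\<bar> < sqrt 3"
  proof -
    have "t^2 < 3" unfolding t_def using RI Rp by (simp add: power_divide divide_less_eq)
    thus ?thesis by (simp add: real_less_rsqrt)
  qed
  have at3: "arctan (sqrt 3) = pi/3" using arctan_tan[of "pi/3"] tan_60 by simp
  have tl1: "t < sqrt 3" and tl2: "-sqrt 3 < t" using tb by (simp_all add: abs_less_iff)
  have th1: "\<theta> < pi/3" unfolding \<theta>_def at3[symmetric] arctan_less_iff by (rule tl1)
  have m3: "-(pi/3) = arctan (- sqrt 3)" by (simp add: arctan_minus at3)
  have th2: "\<theta> > -(pi/3)" unfolding \<theta>_def m3 arctan_less_iff by (rule tl2)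
  define y where "y = 1/6 - \<theta>/(2*pi)"
  have y0: "0 < y" and y1: "y < 1/3" unfolding y_def using th1 th2 pi_gt_zero by (auto simp: field_simps)
  define m where "m = \<lfloor>A / (2*pi)\<rfloor>"
  have Aeq: "A = 2*pi*\<phi> + \<theta> + of_int n*2*pi" using n unfolding \<delta>_def by simp
  have r1: "rmod A (2*pi) / (2*pi) = A/(2*pi) - of_int m"
    unfolding rmod_def m_def using pi_gt_zero by (simp add: diff_divide_distrib)
  have r2: "A/(2*pi) = \<phi> + \<theta>/(2*pi) + of_int n"
    unfolding Aeq using pi_gt_zero by (simp add: add_divide_distrib)
  define w where "w = rmod A (2*pi) / (2*pi) - 1/6"
  have wq: "w = \<phi> - y + of_int (n - m)" unfolding w_def r1 r2 y_def by simp
  have "rmod \<phi> 1 - rmod w 1 = y + of_int (m - n + \<lfloor>w\<rfloor> - \<lfloor>\<phi>\<rfloor>)"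
    unfolding rmod_def using wq by simp
  hence "rmod (rmod \<phi> 1 - rmod w 1) 1 = rmod (y + of_int (m - n + \<lfloor>w\<rfloor> - \<lfloor>\<phi>\<rfloor>)) 1" by simp
  also have "\<dots> = y" using y0 y1 by (intro rmod1_shift) auto
  finally have "rmod (rmod \<phi> 1 - rmod w 1) 1 = y" .
  thus ?thesis using y0 y1 unfolding A_def z_def w_def by simp
qed



lemma aux01: fixes c :: real assumes "-1 \<le> c" "c \<le> 1" shows "(1+c)/2 \<in> {0..1}"
  using assms by simp

lemma marg1: "measure_pmf.prob (NxNy N \<phi>) {(nx, ny). P nx} = measure_pmf.prob (binomial_pmf N (px \<phi>)) {x. P x}"
proof -
  have "{(nx, ny). P nx} = {x. P x} \<times> (UNIV :: nat set)" by auto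
  thus ?thesis unfolding NxNy_def by (simp add: measure_pmf_prob_product)
qed

lemma marg2: "measure_pmf.prob (NxNy N \<phi>) {(nx, ny). P ny} = measure_pmf.prob (binomial_pmf N (py \<phi>)) {x. P x}"
proof -
  have "{(nx, ny). P ny} = (UNIV :: nat set) \<times> {x. P x}" by auto
  thus ?thesis unfolding NxNy_def by (simp add: measure_pmf_prob_product)
qed

theorem mainTheorem3:
  fixes l N :: nat and \<epsilon> \<phi> :: real
  assumes "l > 0" and "0 < \<epsilon>" and "\<epsilon> < 1" and "N > 0"
    and "real N \<ge> 5.34 * ln (4 * real l / \<epsilon>)"
  shows "measure_pmf.prob (NxNy N \<phi>) {(nx, ny). \<bar>real nx / real N - px \<phi>\<bar> \<le> 0.306}
           \<ge> sqrt (1 - \<epsilon> / real l)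
       \<and> measure_pmf.prob (NxNy N \<phi>) {(nx, ny). \<bar>real ny / real N - py \<phi>\<bar> \<le> 0.306}
           \<ge> sqrt (1 - \<epsilon> / real l)
       \<and> measure_pmf.prob (NxNy N \<phi>)
           {(nx, ny). rmod (rmod \<phi> 1 - est_x N nx ny) 1 \<in> {0<..<1/3}}
           \<ge> 1 - \<epsilon> / real l"
proof -
  define q where "q = \<epsilon> / real l"
  have q0: "0 < q" and q1: "q < 1" unfolding q_def using assms by (auto simp: field_simps)
  have qq: "\<epsilon> / (2 * real l) = q/2" unfolding q_def by simp
  have pxr: "px \<phi> \<in> {0..1}" unfolding px_def by (rule aux01) simp_all
  have pyr: "py \<phi> \<in> {0..1}" unfolding py_def by (rule aux01) simp_all
  define A where "A = {x. \<bar>real x / real N - px \<phi>\<bar> \<le> 0.306}"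
  define B where "B = {x. \<bar>real x / real N - py \<phi>\<bar> \<le> 0.306}"
  have PA: "measure_pmf.prob (binomial_pmf N (px \<phi>)) A \<ge> 1 - q/2"
    unfolding A_def using hoeff[OF assms pxr] qq by simp
  have PB: "measure_pmf.prob (binomial_pmf N (py \<phi>)) B \<ge> 1 - q/2"
    unfolding B_def using hoeff[OF assms pyr] qq by simp
  have sq: "sqrt (1 - q) \<le> 1 - q/2"
  proof (rule real_le_lsqrt)
    show "0 \<le> 1 - q/2" using q1 by simp
    show "1 - q \<le> (1 - q/2)^2" by (simp add: power2_eq_square algebra_simps)
  qed
  have C1: "measure_pmf.prob (NxNy N \<phi>) {(nx, ny). \<bar>real nx / real N - px \<phi>\<bar> \<le> 0.306} \<ge> sqrt (1 - q)"
    using marg1[of N \<phi> "\<lambda>x. \<bar>real x / real N - px \<phi>\<bar> \<le> 0.306"] PA sq unfolding A_def by simp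
  have C2: "measure_pmf.prob (NxNy N \<phi>) {(nx, ny). \<bar>real ny / real N - py \<phi>\<bar> \<le> 0.306} \<ge> sqrt (1 - q)"
    using marg2[of N \<phi> "\<lambda>x. \<bar>real x / real N - py \<phi>\<bar> \<le> 0.306"] PB sq unfolding B_def by simp
  have sub: "A \<times> B \<subseteq> {(nx, ny). rmod (rmod \<phi> 1 - est_x N nx ny) 1 \<in> {0<..<1/3}}"
  proof clarify
    fix nx ny assume "nx \<in> A" "ny \<in> B"
    hence ha: "\<bar>real nx / real N - px \<phi>\<bar> \<le> 0.306" and hb: "\<bar>real ny / real N - py \<phi>\<bar> \<le> 0.306"
      unfolding A_def B_def by auto
    have de: "(2 * real nx / real N - 1) - cos (2*pi*\<phi>) = 2 * (real nx / real N - px \<phi>)"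
      unfolding px_def by (simp add: algebra_simps)
    have ea: "\<bar>(2 * real nx / real N - 1) - cos (2*pi*\<phi>)\<bar> \<le> 0.612"
      unfolding de abs_mult using ha by simp
    have df: "(2 * real ny / real N - 1) - sin (2*pi*\<phi>) = 2 * (real ny / real N - py \<phi>)"
      unfolding py_def by (simp add: algebra_simps)
    have eb: "\<bar>(2 * real ny / real N - 1) - sin (2*pi*\<phi>)\<bar> \<le> 0.612"
      unfolding df abs_mult using hb by simp
    show "rmod (rmod \<phi> 1 - est_x N nx ny) 1 \<in> {0<..<1/3}"
      using geo[OF ea eb] unfolding est_x_def est_t_def atan2_def .
  qed
  let ?PA = "measure_pmf.prob (binomial_pmf N (px \<phi>)) A"
  let ?PB = "measure_pmf.prob (binomial_pmf N (py \<phi>)) B"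
  have P: "measure_pmf.prob (NxNy N \<phi>) (A \<times> B) = ?PA * ?PB"
    unfolding NxNy_def by (simp add: measure_pmf_prob_product)
  have M: "(1 - q/2) * (1 - q/2) \<le> ?PA * ?PB"
    using PA PB q1 by (intro mult_mono) auto
  have E1: "(1 - q/2) * (1 - q/2) = 1 - q + q*q/4" by (simp add: algebra_simps)
  have E2: "q*q \<ge> 0" by simp
  have "measure_pmf.prob (NxNy N \<phi>) (A \<times> B) \<ge> 1 - q"
    using P M E1 E2 by linarith
  moreover have "measure_pmf.prob (NxNy N \<phi>) (A \<times> B) \<le> measure_pmf.prob (NxNy N \<phi>) {(nx, ny). rmod (rmod \<phi> 1 - est_x N nx ny) 1 \<in> {0<..<1/3}}"
    using sub by (intro measure_pmf.finite_measure_mono) auto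
  ultimately have C3: "measure_pmf.prob (NxNy N \<phi>) {(nx, ny). rmod (rmod \<phi> 1 - est_x N nx ny) 1 \<in> {0<..<1/3}} \<ge> 1 - q"
    by linarith
  show ?thesis unfolding q_def[symmetric] by (intro conjI C1 C2 C3)
qed

end
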